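(* Let $\alpha>0$, $\rho>0$, and let $N\ge1$ be such that $\lambda_j:=(\pi j)^2-\alpha<\rho$ for $j=1,\dots,N$ and $\lambda_j\ge\rho$ for $j\ge N+1$. Let $\rho<\gamma_1<\gamma_2<\dots<\gamma_N$. Let $\phi_j(x)=\sin(\pi jx)$, let $B_0$ be the $N\times N$ matrix with entries $(B_0)_{ij}=\phi_i'(1)\phi_j'(1)$, let $\Lambda_{\gamma_k}=\mathrm{diag}\big(\frac{1}{\gamma_k-\lambda_i}\big)_{1\le i\le N}$ and $B_k=\Lambda_{\gamma_k}B_0\Lambda_{\gamma_k}$ for $k=1,\dots,N$. Then the matrix $B_1+B_2+\dots+B_N$ is invertible. *)

theory Defs
  imports "HOL-Analysis.Analysis" "Jordan_Normal_Form.Matrix"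
begin

definition lam :: "real \<Rightarrow> nat \<Rightarrow> real" where
  "lam \<alpha> j = (pi * real j)^2 - \<alpha>"

definition phi :: "nat \<Rightarrow> real \<Rightarrow> real" where
  "phi j x = sin (pi * real j * x)"

(* N x N matrices, 0-based JNF indices: row/column i corresponds to index i+1 *)
definition B0 :: "nat \<Rightarrow> real mat" where
  "B0 N = mat N N (\<lambda>(i, j). deriv (phi (i+1)) 1 * deriv (phi (j+1)) 1)"

definition Lam :: "real \<Rightarrow> nat \<Rightarrow> real \<Rightarrow> real mat" where
  "Lam \<alpha> N g = mat N N (\<lambda>(i, j). if i = j then 1 / (g - lam \<alpha> (i+1)) else 0)"

definition Bk :: "real \<Rightarrow> nat \<Rightarrow> (nat \<Rightarrow> real) \<Rightarrow> nat \<Rightarrow> real mat" where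
  "Bk \<alpha> N \<gamma> k = Lam \<alpha> N (\<gamma> k) * B0 N * Lam \<alpha> N (\<gamma> k)"

definition Bsum :: "real \<Rightarrow> nat \<Rightarrow> (nat \<Rightarrow> real) \<Rightarrow> real mat" where
  "Bsum \<alpha> N \<gamma> = foldr (\<lambda>k A. Bk \<alpha> N \<gamma> k + A) [1..<N+1] (0\<^sub>m N N)"

end

theory Submission
  imports Defs "Jordan_Normal_Form.Determinant" "HOL-Computational_Algebra.Polynomial"
begin

lemma cauchy_zero:
  fixes a y :: "nat \<Rightarrow> real" and G :: "real set"
  assumes inj: "inj_on a {..<n}" and fin: "finite G" and cG: "card G = n"
    and ne: "\<And>g i. g \<in> G \<Longrightarrow> i < n \<Longrightarrow> g \<noteq> a i"
    and z: "\<And>g. g \<in> G \<Longrightarrow> (\<Sum>i<n. y i / (g - a i)) = 0"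
    and i: "i < n"
  shows "y i = 0"
proof -
  define P where "P = (\<Sum>i<n. Polynomial.smult (y i) (\<Prod>j\<in>{..<n}-{i}. [:-a j, 1:]))"
  have polyP: "poly P x = (\<Sum>i<n. y i * (\<Prod>j\<in>{..<n}-{i}. (x - a j)))" for x
    unfolding P_def by (simp add: poly_sum poly_prod)
  have degP: "degree P \<le> n - 1"
    unfolding P_def
  proof (rule degree_sum_le)
    fix i assume "i \<in> {..<n}"
    have "degree (Polynomial.smult (y i) (\<Prod>j\<in>{..<n}-{i}. [:-a j, 1:])) \<le> degree (\<Prod>j\<in>{..<n}-{i}. [:-a j, 1:])"
      by (rule degree_smult_le)
    also have "\<dots> \<le> sum (degree \<circ> (\<lambda>j. [:-a j, 1:])) ({..<n}-{i})"
      by (rule degree_prod_sum_le) simp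
    also have "\<dots> = card ({..<n}-{i})" by simp
    also have "\<dots> = n - 1" using \<open>i \<in> {..<n}\<close> by simp
    finally show "degree (Polynomial.smult (y i) (\<Prod>j\<in>{..<n}-{i}. [:-a j, 1:])) \<le> n - 1" .
  qed simp
  have root: "poly P g = 0" if g: "g \<in> G" for g
  proof -
    have "(\<Prod>j<n. (g - a j)) * (\<Sum>i<n. y i / (g - a i)) = (\<Sum>i<n. y i * (\<Prod>j\<in>{..<n}-{i}. (g - a j)))"
      unfolding sum_distrib_left
    proof (rule sum.cong)
      fix i assume ii: "i \<in> {..<n}"
      have "(\<Prod>j<n. (g - a j)) = (g - a i) * (\<Prod>j\<in>{..<n}-{i}. (g - a j))"
        using ii by (simp add: prod.remove)
      moreover have "g - a i \<noteq> 0" using ne[OF g] ii by auto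
      ultimately show "(\<Prod>j<n. (g - a j)) * (y i / (g - a i)) = y i * (\<Prod>j\<in>{..<n}-{i}. (g - a j))"
        by simp
    qed simp
    then show ?thesis using z[OF g] polyP by simp
  qed
  have "P = 0"
  proof (rule poly_eqI_degree[of G])
    show "\<And>x. x \<in> G \<Longrightarrow> poly P x = poly 0 x" using root by simp
    show "degree P < card G" using degP cG i by simp
    show "degree 0 < card G" using cG i by simp
  qed
  then have "poly P (a i) = 0" by simp
  moreover have "poly P (a i) = y i * (\<Prod>j\<in>{..<n}-{i}. (a i - a j))"
  proof -
    have "(\<Sum>k<n. y k * (\<Prod>j\<in>{..<n}-{k}. (a i - a j))) = (\<Sum>k\<in>{i}. y k * (\<Prod>j\<in>{..<n}-{k}. (a i - a j)))"
    proof (rule sum.mono_neutral_right)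
      show "\<forall>k\<in>{..<n} - {i}. y k * (\<Prod>j\<in>{..<n}-{k}. (a i - a j)) = 0"
      proof
        fix k assume "k \<in> {..<n} - {i}"
        then have "i \<in> {..<n}-{k}" using i by auto
        then show "y k * (\<Prod>j\<in>{..<n}-{k}. (a i - a j)) = 0"
          by (metis finite_Diff finite_lessThan mult_eq_0_iff prod_zero_iff right_minus_eq)
      qed
    qed (use i in auto)
    then show ?thesis using polyP by simp
  qed
  moreover have "(\<Prod>j\<in>{..<n}-{i}. (a i - a j)) \<noteq> 0"
    using inj i by (auto simp: inj_on_def)
  ultimately show ?thesis by simp
qed

lemma d_nonzero: assumes "j \<ge> 1" shows "deriv (phi j) 1 \<noteq> 0"
proof -
  have "((\<lambda>x. sin (pi * real j * x)) has_real_derivative cos (pi * real j * 1) * (pi * real j)) (at 1)"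
    by (auto intro!: derivative_eq_intros)
  then have "deriv (phi j) 1 = cos (pi * real j) * (pi * real j)"
    unfolding phi_def[abs_def] by (simp add: DERIV_imp_deriv)
  also have "cos (pi * real j) = (-1) ^ j" using cos_npi[of j] by (simp add: mult.commute)
  finally show ?thesis using assms by simp
qed

lemma ifz_mult: "(if P then (a::real) else 0) * b = (if P then a * b else 0)"
  "b * (if P then (a::real) else 0) = (if P then b * a else 0)" by auto

lemma Lam_left: assumes "M \<in> carrier_mat N N"
  shows "Lam \<alpha> N g * M = mat N N (\<lambda>(i,j). 1 / (g - lam \<alpha> (i+1)) * M $$ (i,j))"
  using assms by (auto intro!: eq_matI simp: Lam_def scalar_prod_def ifz_mult)

lemma Lam_right: assumes "M \<in> carrier_mat N N"
  shows "M * Lam \<alpha> N g = mat N N (\<lambda>(i,j). M $$ (i,j) * (1 / (g - lam \<alpha> (j+1))))"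
  using assms by (auto intro!: eq_matI simp: Lam_def scalar_prod_def ifz_mult)

definition ee :: "real \<Rightarrow> (nat \<Rightarrow> real) \<Rightarrow> nat \<Rightarrow> nat \<Rightarrow> real" where
  "ee \<alpha> \<gamma> k i = deriv (phi (i+1)) 1 / (\<gamma> k - lam \<alpha> (i+1))"

lemma Bk_eq: "Bk \<alpha> N \<gamma> k = mat N N (\<lambda>(i,j). ee \<alpha> \<gamma> k i * ee \<alpha> \<gamma> k j)"
proof -
  have B0: "B0 N \<in> carrier_mat N N" by (simp add: B0_def)
  have "Lam \<alpha> N (\<gamma> k) \<in> carrier_mat N N" by (simp add: Lam_def)
  then have "Lam \<alpha> N (\<gamma> k) * B0 N \<in> carrier_mat N N" using B0 by simp
  then have "Bk \<alpha> N \<gamma> k = mat N N (\<lambda>(i,j). (Lam \<alpha> N (\<gamma> k) * B0 N) $$ (i,j) * (1 / (\<gamma> k - lam \<alpha> (j+1))))"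
    unfolding Bk_def by (rule Lam_right)
  also have "\<dots> = mat N N (\<lambda>(i,j). ee \<alpha> \<gamma> k i * ee \<alpha> \<gamma> k j)"
    unfolding Lam_left[OF B0]
    by (auto intro!: eq_matI simp: B0_def ee_def)
  finally show ?thesis .
qed

lemma foldr_Bk: "foldr (\<lambda>k A. Bk \<alpha> N \<gamma> k + A) ks (0\<^sub>m N N)
   = mat N N (\<lambda>(i,j). \<Sum>k\<leftarrow>ks. ee \<alpha> \<gamma> k i * ee \<alpha> \<gamma> k j)"
  by (induction ks) (auto intro!: eq_matI simp: Bk_eq)

lemma Bsum_eq: "Bsum \<alpha> N \<gamma> = mat N N (\<lambda>(i,j). \<Sum>k\<in>{1..N}. ee \<alpha> \<gamma> k i * ee \<alpha> \<gamma> k j)"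
proof -
  have "(\<Sum>k\<leftarrow>[1..<N+1]. f k) = (\<Sum>k\<in>{1..N}. f k)" for f :: "nat \<Rightarrow> real"
  proof -
    have e: "set [1..<N+1] = {1..N}" by auto
    show ?thesis by (metis e sum_set_upt_conv_sum_list_nat)
  qed
  then show ?thesis unfolding Bsum_def foldr_Bk by simp
qed

lemma quad_form:
  fixes e :: "nat \<Rightarrow> nat \<Rightarrow> real" and v :: "nat \<Rightarrow> real"
  shows "(\<Sum>i<N. v i * (\<Sum>j<N. (\<Sum>k\<in>K. e k i * e k j) * v j)) = (\<Sum>k\<in>K. (\<Sum>i<N. e k i * v i)^2)"
proof -
  have "(\<Sum>i<N. v i * (\<Sum>j<N. (\<Sum>k\<in>K. e k i * e k j) * v j)) = (\<Sum>i<N. \<Sum>j<N. \<Sum>k\<in>K. (e k i * v i) * (e k j * v j))"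
    by (simp add: sum_distrib_left sum_distrib_right algebra_simps)
  also have "\<dots> = (\<Sum>i<N. \<Sum>k\<in>K. \<Sum>j<N. (e k i * v i) * (e k j * v j))"
    by (rule sum.cong[OF refl], rule sum.swap)
  also have "\<dots> = (\<Sum>k\<in>K. \<Sum>i<N. \<Sum>j<N. (e k i * v i) * (e k j * v j))"
    by (rule sum.swap)
  also have "\<dots> = (\<Sum>k\<in>K. (\<Sum>i<N. e k i * v i)^2)"
    by (simp add: power2_eq_square sum_product)
  finally show ?thesis .
qed

theorem lemma5p2:
  fixes \<alpha> \<rho> :: real and N :: nat and \<gamma> :: "nat \<Rightarrow> real"
  assumes "\<alpha> > 0" and "\<rho> > 0" and "N \<ge> 1"
    and "\<And>j. 1 \<le> j \<Longrightarrow> j \<le> N \<Longrightarrow> lam \<alpha> j < \<rho>"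
    and "\<And>j. j \<ge> N + 1 \<Longrightarrow> lam \<alpha> j \<ge> \<rho>"
    and "\<rho> < \<gamma> 1"
    and "\<And>k. 1 \<le> k \<Longrightarrow> k < N \<Longrightarrow> \<gamma> k < \<gamma> (k + 1)"
  shows "invertible_mat (Bsum \<alpha> N \<gamma>)"
proof -
  let ?M = "Bsum \<alpha> N \<gamma>"
  have Mc: "?M \<in> carrier_mat N N" by (simp add: Bsum_eq)
  have mono: "\<gamma> k < \<gamma> l" if "1 \<le> k" "k < l" "l \<le> N" for k l
    using that
  proof (induction l rule: less_induct)
    case (less l)
    then obtain m where l: "l = Suc m" by (cases l) auto
    show ?case
    proof (cases "k = m")
      case True then show ?thesis using assms(7)[of m] less l by simp
    next
      case False
      then have "\<gamma> k < \<gamma> m" using less l by auto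
      also have "\<gamma> m < \<gamma> l" using assms(7)[of m] less l False by simp
      finally show ?thesis .
    qed
  qed
  have gbig: "\<gamma> k > \<rho>" if "1 \<le> k" "k \<le> N" for k
  proof (cases "k = 1")
    case True then show ?thesis using assms(6) by simp
  next
    case False then show ?thesis using mono[of 1 k] that assms(6) by simp
  qed
  have det: "det ?M \<noteq> 0"
  proof
    assume "det ?M = 0"
    then obtain v where v: "v \<in> carrier_vec N" "v \<noteq> 0\<^sub>v N" "?M *\<^sub>v v = 0\<^sub>v N"
      using det_0_iff_vec_prod_zero[OF Mc] by auto
    let ?e = "ee \<alpha> \<gamma>"
    have row: "(\<Sum>j<N. (\<Sum>k\<in>{1..N}. ?e k i * ?e k j) * v $ j) = 0" if "i < N" for i
    proof -
      have "(?M *\<^sub>v v) $ i = 0" using v(3) that by simp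
      then show ?thesis using that v(1)
        by (simp add: Bsum_eq scalar_prod_def lessThan_atLeast0)
    qed
    have "(\<Sum>k\<in>{1..N}. (\<Sum>i<N. ?e k i * v $ i)^2) = 0"
      unfolding quad_form[symmetric, where v = "\<lambda>i. v $ i"] using row by simp
    then have zk: "(\<Sum>i<N. ?e k i * v $ i) = 0" if "k \<in> {1..N}" for k
      using that by (subst (asm) sum_nonneg_eq_0_iff) auto
    have vi: "deriv (phi (i+1)) 1 * v $ i = 0" if "i < N" for i
    proof (rule cauchy_zero[where a = "\<lambda>i. lam \<alpha> (i+1)" and G = "\<gamma> ` {1..N}" and n = N])
      show "inj_on (\<lambda>i. lam \<alpha> (i + 1)) {..<N}"
        by (auto simp: inj_on_def lam_def power2_eq_iff_nonneg)
      show "finite (\<gamma> ` {1..N})" by simp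
      have "inj_on \<gamma> {1..N}"
      proof (rule inj_onI)
        fix x y assume xy: "x \<in> {1..N}" "y \<in> {1..N}" "\<gamma> x = \<gamma> y"
        show "x = y"
        proof (rule ccontr)
          assume "x \<noteq> y"
          then consider "x < y" | "y < x" by linarith
          then show False using mono[of x y] mono[of y x] xy by cases auto
        qed
      qed
      then show "card (\<gamma> ` {1..N}) = N" by (simp add: card_image)
      show "g \<noteq> lam \<alpha> (i + 1)" if "g \<in> \<gamma> ` {1..N}" "i < N" for g i
        using that gbig assms(4)[of "i+1"] by fastforce
      show "(\<Sum>i<N. deriv (phi (i+1)) 1 * v $ i / (g - lam \<alpha> (i + 1))) = 0" if "g \<in> \<gamma> ` {1..N}" for g
        using that zk by (auto simp: ee_def)
      show "i < N" by fact
    qed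
    have "v = 0\<^sub>v N"
    proof (rule eq_vecI)
      fix i assume "i < dim_vec (0\<^sub>v N :: real vec)"
      then show "v $ i = 0\<^sub>v N $ i" using vi[of i] d_nonzero[of "i+1"] by simp
    qed (use v in simp)
    with v(2) show False by simp
  qed
  from det_non_zero_imp_unit[OF Mc det, of "()"]
  obtain B where B: "B \<in> carrier_mat N N" "B * ?M = 1\<^sub>m N" "?M * B = 1\<^sub>m N"
    unfolding Units_def ring_mat_def by auto
  show ?thesis unfolding invertible_mat_def inverts_mat_def
    using Mc B by (auto simp: square_mat.simps)
qed

end
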